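(* Let $q$ be a prime power, $S \subset \mathbb{F}_q^n$, $0 < \sigma < \tau$, and let $3 \le k \le n$ be an integer such that $E_{k-2}(S) \geq q$. Let $T \in \mathcal{L}_k(\mathbb{F}_q^n)$ be $\tau$-unbalanced with respect to $S$, and let $R$ be chosen uniformly at random from the set of $(k-2)$-flats contained in $T$. Then $$\Pr[R \text{ is } \sigma\text{-unbalanced with respect to } S] \geq 1 - \frac{1+\tau}{(\tau-\sigma)^2 q}.$$
   Context: $\mathcal{L}_j(\mathbb{F}_q^n)$ denotes the set of $j$-dimensional affine subspaces ($j$-flats) of $\mathbb{F}_q^n$. For $S \subset \mathbb{F}_q^n$, $E_j(S) = |S|/q^{n-j}$. A flat $R \in \mathcal{L}_j(\mathbb{F}_q^n)$ is $\sigma$-balanced with respect to $S$ if $\big||R \cap S| - E_j(S)\big| \leq \sigma E_j(S)$, and $\sigma$-unbalanced otherwise. *)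

theory Defs
  imports "HOL-Analysis.Analysis"
begin

text \<open>Vectors of F_q^n are modelled as 'a ^ 'n with 'a a finite field (so q = CARD('a),
  automatically a prime power) and n = CARD('n).\<close>

definition flats :: "nat \<Rightarrow> ('a::field ^ 'n) set set" where
  "flats j = {A. \<exists>a V. vec.subspace V \<and> vec.dim V = j \<and> A = (\<lambda>v. a + v) ` V}"

definition expected :: "nat \<Rightarrow> ('a::{finite,field} ^ 'n) set \<Rightarrow> real" where
  "expected j S = real (card S) / real CARD('a) ^ (CARD('n) - j)"

definition balanced :: "real \<Rightarrow> ('a::{finite,field} ^ 'n) set \<Rightarrow> nat \<Rightarrow> ('a ^ 'n) set \<Rightarrow> bool" where
  "balanced \<sigma> S j R \<longleftrightarrow> \<bar>real (card (R \<inter> S)) - expected j S\<bar> \<le> \<sigma> * expected j S"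

end

theory Submission
  imports Defs
begin

lemma card_span_indep:
  fixes B :: "('a::{finite,field}^'n) set"
  assumes "vec.independent B"
  shows "card (vec.span B) = CARD('a) ^ card B"
proof -
  have "finite B" by simp
  then show ?thesis using assms
  proof (induction B rule: finite_induct)
    case empty
    then show ?case by simp
  next
    case (insert b B)
    have ind: "vec.independent B" and nb: "b \<notin> vec.span B"
      using insert.prems insert.hyps vec.independent_insert[of b B] by auto
    have eq: "vec.span (insert b B) = (\<lambda>(c,y). c *s b + y) ` (UNIV \<times> vec.span B)"
    proof
      show "vec.span (insert b B) \<subseteq> (\<lambda>(c,y). c *s b + y) ` (UNIV \<times> vec.span B)"
      proof
        fix x assume "x \<in> vec.span (insert b B)"
        then obtain c where "x - c *s b \<in> vec.span B" using vec.span_insert by blast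
        then show "x \<in> (\<lambda>(c,y). c *s b + y) ` (UNIV \<times> vec.span B)"
          by (intro image_eqI[where x="(c, x - c *s b)"]) auto
      qed
      show "(\<lambda>(c,y). c *s b + y) ` (UNIV \<times> vec.span B) \<subseteq> vec.span (insert b B)"
        by (auto intro!: vec.span_add vec.span_scale simp: vec.span_base) (meson subsetD subset_insertI vec.span_mono)
    qed
    have inj: "inj_on (\<lambda>(c,y). c *s b + y) (UNIV \<times> vec.span B)"
    proof (rule inj_onI, clarsimp)
      fix c y c' y'
      assume y: "y \<in> vec.span B" "y' \<in> vec.span B" and e: "c *s b + y = c' *s b + y'"
      show "c = c' \<and> y = y'"
      proof (cases "c = c'")
        case True then show ?thesis using e by simp
      next
        case False
        have "(c - c') *s b = y' - y" using e by (simp add: algebra_simps vector_sadd_rdistrib)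
        moreover have "(1/(c - c')) * (c - c') = 1" using False by simp
        then have "b = (1/(c - c')) *s ((c - c') *s b)" by (metis vector_smult_assoc vector_smult_lid)
        ultimately have "b = (1/(c - c')) *s (y' - y)" by simp
        then have "b \<in> vec.span B" using y by (simp add: vec.span_scale vec.span_diff)
        then show ?thesis using nb by simp
      qed
    qed
    have "card (vec.span (insert b B)) = CARD('a) * card (vec.span B)"
      unfolding eq card_image[OF inj] by (simp add: card_cartesian_product)
    then show ?case using insert.IH ind insert.hyps by simp
  qed
qed

lemma card_subspace:
  fixes V :: "('a::{finite,field}^'n) set"
  assumes "vec.subspace V"
  shows "card V = CARD('a) ^ vec.dim V"
proof -
  obtain B where "B \<subseteq> V" "vec.independent B" "vec.span B = V" "card B = vec.dim V"
    using vec.basis_subspace_exists[OF assms] by metis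
  then show ?thesis using card_span_indep by metis
qed

lemma card_flat:
  fixes R :: "('a::{finite,field}^'n) set"
  assumes "R \<in> flats j"
  shows "card R = CARD('a) ^ j"
proof -
  obtain a V where "vec.subspace V" "vec.dim V = j" "R = (\<lambda>v. a + v) ` V"
    using assms unfolding flats_def by auto
  moreover have "card R = card V" using \<open>R = _\<close> card_image[of "\<lambda>v. a + v" V] by (simp add: inj_on_def)
  ultimately show ?thesis using card_subspace[of V] by simp
qed

lemma flat_affine_image:
  fixes f :: "'a::field^'n \<Rightarrow> 'a^'n"
  assumes lin: "Vector_Spaces.linear (*s) (*s) f" and inj: "inj f" and R: "R \<in> flats j"
  shows "(\<lambda>z. c + f z) ` R \<in> flats j"
proof -
  obtain b U where U: "vec.subspace U" "vec.dim U = j" "R = (\<lambda>v. b + v) ` U"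
    using R unfolding flats_def by auto
  have "(\<lambda>z. c + f z) ` R = (\<lambda>v. (c + f b) + v) ` (f ` U)"
    using U(3) by (auto simp: image_image vec.linear_add[OF lin] add.assoc)
  moreover have "vec.subspace (f ` U)" using vec.linear_subspace_image[OF lin U(1)] .
  moreover have "vec.dim (f ` U) = j"
    using vec.dim_image_eq[OF lin, of U] inj U(2) by (simp add: inj_on_subset)
  ultimately show ?thesis unfolding flats_def by blast
qed

lemma transvection:
  fixes v v' :: "'a::field^'n"
  assumes "v$i \<noteq> 0" "v'$i \<noteq> 0"
  shows "Vector_Spaces.linear (*s) (*s) (\<lambda>z. z + (z$i / v$i) *s (v' - v))"
    and "inj (\<lambda>z. z + (z$i / v$i) *s (v' - v))"
    and "(\<lambda>z. z + (z$i / v$i) *s (v' - v)) v = v'"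
    and "vec.subspace W \<Longrightarrow> v \<in> W \<Longrightarrow> v' \<in> W \<Longrightarrow> z \<in> W \<Longrightarrow> (\<lambda>z. z + (z$i / v$i) *s (v' - v)) z \<in> W"
proof -
  show "Vector_Spaces.linear (*s) (*s) (\<lambda>z. z + (z$i / v$i) *s (v' - v))"
    unfolding Vector_Spaces.linear_iff
    by (auto simp: vec.vector_space_axioms add_divide_distrib vector_sadd_rdistrib vector_smult_assoc)
  show "inj (\<lambda>z. z + (z$i / v$i) *s (v' - v))"
  proof (rule injI)
    fix z1 z2 assume e: "z1 + (z1$i / v$i) *s (v' - v) = z2 + (z2$i / v$i) *s (v' - v)"
    then have ei: "z1$i + (z1$i / v$i) * (v'$i - v$i) = z2$i + (z2$i / v$i) * (v'$i - v$i)"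
      by (metis vector_add_component vector_smult_component vector_minus_component)
    have "z1$i * v'$i / v$i = z2$i * v'$i / v$i"
      using ei assms by (simp add: field_simps)
    then have "z1$i = z2$i" using assms by (simp add: field_simps)
    then show "z1 = z2" using e by simp
  qed
  show "(\<lambda>z. z + (z$i / v$i) *s (v' - v)) v = v'" using assms by simp
  show "vec.subspace W \<Longrightarrow> v \<in> W \<Longrightarrow> v' \<in> W \<Longrightarrow> z \<in> W \<Longrightarrow> (\<lambda>z. z + (z$i / v$i) *s (v' - v)) z \<in> W"
    by (simp add: vec.subspace_add vec.subspace_diff vec.subspace_scale)
qed

lemma memT: fixes a z :: "'a::ab_group_add" assumes "T = (\<lambda>v. a + v) ` W" shows "(z \<in> T) = (z - a \<in> W)"
proof
  assume "z \<in> T" then obtain w where "w \<in> W" "z = a + w" using assms by auto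
  then show "z - a \<in> W" by simp
next
  assume "z - a \<in> W" then have "a + (z - a) \<in> T" using assms by blast
  then show "z \<in> T" by simp
qed

lemma count_mono:
  fixes f :: "'a::{finite,field}^'n \<Rightarrow> 'a^'n"
  assumes W: "vec.subspace W" and T: "T = (\<lambda>v. a + v) ` W"
    and lin: "Vector_Spaces.linear (*s) (*s) f" and inj: "inj f" and fW: "\<And>w. w \<in> W \<Longrightarrow> f w \<in> W"
    and x: "x \<in> T" "x' \<in> T"
  shows "card {R. R \<in> flats j \<and> R \<subseteq> T \<and> y \<in> R \<and> z \<in> R}
    \<le> card {R. R \<in> flats j \<and> R \<subseteq> T \<and> x' + f (y - x) \<in> R \<and> x' + f (z - x) \<in> R}"
proof -
  define g where "g = (\<lambda>u. x' + f (u - x))"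
  have g2: "g = (\<lambda>u. (x' - f x) + f u)" unfolding g_def
    by (auto simp: vec.linear_diff[OF lin])
  have ginj: "inj g" using inj unfolding g_def inj_def by (metis add_left_cancel diff_add_cancel)
  have gT: "g ` R \<subseteq> T" if "R \<subseteq> T" for R
  proof
    fix u assume "u \<in> g ` R"
    then obtain r where r: "r \<in> R" "u = g r" by auto
    have "r \<in> T" using r that by blast
    then have "r - a \<in> W" "x - a \<in> W" "x' - a \<in> W" using x by (simp_all only: memT[OF T])
    then have "r - x \<in> W" using vec.subspace_diff[OF W, of "r - a" "x - a"] by simp
    then have "(x' - a) + f (r - x) \<in> W" using fW vec.subspace_add[OF W] \<open>x' - a \<in> W\<close> by blast
    moreover have "g r - a = (x' - a) + f (r - x)" unfolding g_def by simp
    ultimately show "u \<in> T" using r(2) by (simp only: memT[OF T])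
  qed
  have "card ((`) g ` {R. R \<in> flats j \<and> R \<subseteq> T \<and> y \<in> R \<and> z \<in> R})
        \<le> card {R. R \<in> flats j \<and> R \<subseteq> T \<and> g y \<in> R \<and> g z \<in> R}"
  proof (rule card_mono)
    show "(`) g ` {R. R \<in> flats j \<and> R \<subseteq> T \<and> y \<in> R \<and> z \<in> R}
        \<subseteq> {R. R \<in> flats j \<and> R \<subseteq> T \<and> g y \<in> R \<and> g z \<in> R}"
    proof
      fix S assume "S \<in> (`) g ` {R. R \<in> flats j \<and> R \<subseteq> T \<and> y \<in> R \<and> z \<in> R}"
      then obtain R where R: "R \<in> flats j" "R \<subseteq> T" "y \<in> R" "z \<in> R" "S = g ` R" by blast
      have "S \<in> flats j" using flat_affine_image[OF lin inj R(1)] R(5) unfolding g2 by simp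
      then show "S \<in> {R. R \<in> flats j \<and> R \<subseteq> T \<and> g y \<in> R \<and> g z \<in> R}"
        using gT[OF R(2)] R by blast
    qed
  qed simp
  moreover have "inj_on ((`) g) {R. R \<in> flats j \<and> R \<subseteq> T \<and> y \<in> R \<and> z \<in> R}"
    using ginj by (simp add: inj_on_def inj_image_eq_iff)
  then have "card ((`) g ` {R. R \<in> flats j \<and> R \<subseteq> T \<and> y \<in> R \<and> z \<in> R}) = card {R. R \<in> flats j \<and> R \<subseteq> T \<and> y \<in> R \<and> z \<in> R}"
    by (rule card_image)
  ultimately show ?thesis unfolding g_def by simp
qed

lemma memT_diff:
  fixes a :: "'a::{finite,field}^'n"
  assumes W: "vec.subspace W" and T: "T = (\<lambda>v. a + v) ` W" and "x \<in> T" "y \<in> T"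
  shows "y - x \<in> W"
proof -
  have "y - a \<in> W" "x - a \<in> W" using assms(3,4) by (simp_all only: memT[OF T])
  then have "(y - a) - (x - a) \<in> W" using vec.subspace_diff[OF W] by blast
  then show ?thesis by simp
qed

lemma single_le:
  fixes a :: "'a::{finite,field}^'n"
  assumes W: "vec.subspace W" and T: "T = (\<lambda>v. a + v) ` W" and "x \<in> T" "x' \<in> T"
  shows "card {R. R \<in> flats j \<and> R \<subseteq> T \<and> x \<in> R \<and> x \<in> R}
    \<le> card {R. R \<in> flats j \<and> R \<subseteq> T \<and> x' \<in> R \<and> x' \<in> R}"
proof -
  have lin: "Vector_Spaces.linear (*s) (*s) (\<lambda>z::'a^'n. z)"
    unfolding Vector_Spaces.linear_iff by (simp add: vec.vector_space_axioms)
  show ?thesis using count_mono[OF W T lin _ _ assms(3,4), of j x x] by simp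
qed

lemma pair_step:
  fixes a :: "'a::{finite,field}^'n"
  assumes W: "vec.subspace W" and T: "T = (\<lambda>v. a + v) ` W" and "x \<in> T" "y \<in> T" "x' \<in> T" "y' \<in> T"
    and i: "(y - x)$i \<noteq> 0" "(y' - x')$i \<noteq> 0"
  shows "card {R. R \<in> flats j \<and> R \<subseteq> T \<and> x \<in> R \<and> y \<in> R}
    \<le> card {R. R \<in> flats j \<and> R \<subseteq> T \<and> x' \<in> R \<and> y' \<in> R}"
proof -
  define v where "v = y - x"
  define v' where "v' = y' - x'"
  define f where "f = (\<lambda>z. z + (z$i / v$i) *s (v' - v))"
  have vi: "v$i \<noteq> 0" "v'$i \<noteq> 0" using i v_def v'_def by auto
  have tv1: "Vector_Spaces.linear (*s) (*s) f" unfolding f_def by (rule transvection(1)[OF vi])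
  have tv2: "inj f" unfolding f_def by (rule transvection(2)[OF vi])
  have tv3: "f v = v'" unfolding f_def using transvection(3)[OF vi] by (simp only:)
  have vW: "v \<in> W" "v' \<in> W" using memT_diff[OF W T assms(3,4)] memT_diff[OF W T assms(5,6)] v_def v'_def by auto
  have fW: "f w \<in> W" if "w \<in> W" for w
    unfolding f_def using transvection(4)[OF vi W vW that] by (simp only:)
  have "f 0 = 0" using vec.linear_0[OF tv1] .
  then have "x' + f (x - x) = x'" by simp
  moreover have "x' + f v = y'" using tv3 v'_def by simp
  then have "x' + f (y - x) = y'" unfolding v_def .
  ultimately show ?thesis using count_mono[OF W T tv1 tv2 fW assms(3,5), of j x y] by (simp only:)
qed

lemma pair_le:
  fixes a :: "'a::{finite,field}^'n"
  assumes W: "vec.subspace W" and T: "T = (\<lambda>v. a + v) ` W" and "x \<in> T" "y \<in> T" "x' \<in> T" "y' \<in> T"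
    and "x \<noteq> y" "x' \<noteq> y'"
  shows "card {R. R \<in> flats j \<and> R \<subseteq> T \<and> x \<in> R \<and> y \<in> R}
    \<le> card {R. R \<in> flats j \<and> R \<subseteq> T \<and> x' \<in> R \<and> y' \<in> R}"
proof (cases "\<exists>i. (y - x)$i \<noteq> 0 \<and> (y' - x')$i \<noteq> 0")
  case True
  then show ?thesis using pair_step[OF W T assms(3-6)] by blast
next
  case False
  have "y - x \<noteq> 0" "y' - x' \<noteq> 0" using assms by auto
  then have "\<exists>i. (y - x)$i \<noteq> 0" "\<exists>i. (y' - x')$i \<noteq> 0" by (simp_all add: vec_eq_iff)
  then obtain i i' where i: "(y - x)$i \<noteq> 0" and i': "(y' - x')$i' \<noteq> 0" by blast
  have i2: "(y' - x')$i = 0" and i2': "(y - x)$i' = 0" using False i i' by auto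
  define y'' where "y'' = x + ((y - x) + (y' - x'))"
  have "(y - x) + (y' - x') \<in> W"
    using memT_diff[OF W T assms(3,4)] memT_diff[OF W T assms(5,6)] vec.subspace_add[OF W] by blast
  moreover have "x - a \<in> W" using assms(3) memT[OF T] by blast
  ultimately have "(x - a) + ((y - x) + (y' - x')) \<in> W" using vec.subspace_add[OF W] by blast
  moreover have "y'' - a = (x - a) + ((y - x) + (y' - x'))" unfolding y''_def by simp
  ultimately have y'': "y'' \<in> T" by (simp only: memT[OF T])
  have yx: "y'' - x = (y - x) + (y' - x')" unfolding y''_def by simp
  have c1: "(y'' - x)$i \<noteq> 0" "(y'' - x)$i' \<noteq> 0" unfolding yx using i i' i2 i2' by simp_all
  have "card {R. R \<in> flats j \<and> R \<subseteq> T \<and> x \<in> R \<and> y \<in> R}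
    \<le> card {R. R \<in> flats j \<and> R \<subseteq> T \<and> x \<in> R \<and> y'' \<in> R}"
    by (rule pair_step[OF W T assms(3,4,3) y'' i c1(1)])
  also have "\<dots> \<le> card {R. R \<in> flats j \<and> R \<subseteq> T \<and> x' \<in> R \<and> y' \<in> R}"
    by (rule pair_step[OF W T assms(3) y'' assms(5,6) c1(2) i'])
  finally show ?thesis .
qed

lemma real_part:
  fixes E q \<mu> \<sigma> \<tau> :: real
  assumes q: "0 < q" "q \<le> E" and st: "0 < \<sigma>" "\<sigma> < \<tau>" and mu: "0 \<le> \<mu>" and ub: "\<bar>\<mu> - E\<bar> > \<tau> * E"
  shows "\<exists>\<delta>>0. \<mu> \<le> (1 + \<tau>) / ((\<tau> - \<sigma>)\<^sup>2 * q) * \<delta>\<^sup>2 \<and> (\<forall>X. \<bar>X - E\<bar> \<le> \<sigma> * E \<longrightarrow> \<delta>\<^sup>2 \<le> (X - \<mu>)\<^sup>2)"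
proof -
  define s where "s = \<tau> - \<sigma>"
  have s: "0 < s" "s < 1 + \<tau>" using st s_def by auto
  have E: "0 < E" using q by simp
  have key: "\<mu> * s\<^sup>2 * E \<le> (1 + \<tau>) * \<delta>\<^sup>2 \<Longrightarrow> \<mu> \<le> (1 + \<tau>) / ((\<tau> - \<sigma>)\<^sup>2 * q) * \<delta>\<^sup>2" for \<delta>
  proof -
    assume h: "\<mu> * s\<^sup>2 * E \<le> (1 + \<tau>) * \<delta>\<^sup>2"
    have "\<mu> * s\<^sup>2 * q \<le> \<mu> * s\<^sup>2 * E" using q mu by (simp add: mult_left_mono)
    then have "\<mu> * (s\<^sup>2 * q) \<le> (1 + \<tau>) * \<delta>\<^sup>2" using h by (simp add: mult.assoc)
    then show ?thesis using s q unfolding s_def[symmetric] by (simp add: field_simps)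
  qed
  show ?thesis
  proof (cases "\<mu> \<ge> E")
    case True
    define t where "t = \<mu> - (1 + \<tau>) * E"
    have t: "0 < t" using True ub t_def by (simp add: algebra_simps)
    define \<delta> where "\<delta> = s * E + t"
    have d: "\<delta> > 0" using s E t \<delta>_def by (simp add: add_pos_pos)
    have mt: "\<mu> = (1 + \<tau>) * E + t" using t_def by simp
    have "\<mu> * s\<^sup>2 * E = (1 + \<tau>) * s\<^sup>2 * E\<^sup>2 + t * s * (s * E)"
      unfolding mt by (simp add: power2_eq_square algebra_simps)
    also have "\<dots> \<le> (1 + \<tau>) * s\<^sup>2 * E\<^sup>2 + t * (1 + \<tau>) * (2 * s * E + t)"
    proof -
      have "t * s * (s * E) \<le> t * (1 + \<tau>) * (s * E)"
        using s t E by (intro mult_right_mono mult_left_mono) auto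
      also have "\<dots> \<le> t * (1 + \<tau>) * (2 * s * E + t)"
        using s t E st by (intro mult_left_mono) auto
      finally show ?thesis by simp
    qed
    also have "\<dots> = (1 + \<tau>) * \<delta>\<^sup>2" unfolding \<delta>_def by (simp add: power2_eq_square algebra_simps)
    finally have "\<mu> * s\<^sup>2 * E \<le> (1 + \<tau>) * \<delta>\<^sup>2" .
    moreover have "\<forall>X. \<bar>X - E\<bar> \<le> \<sigma> * E \<longrightarrow> \<delta>\<^sup>2 \<le> (X - \<mu>)\<^sup>2"
    proof (intro allI impI)
      fix X assume "\<bar>X - E\<bar> \<le> \<sigma> * E"
      then have "\<delta> \<le> \<mu> - X" unfolding \<delta>_def mt s_def by (simp add: abs_le_iff algebra_simps)
      then have "\<delta>\<^sup>2 \<le> (\<mu> - X)\<^sup>2" using d by (intro power_mono) auto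
      then show "\<delta>\<^sup>2 \<le> (X - \<mu>)\<^sup>2" by (simp add: power2_commute)
    qed
    ultimately show ?thesis using key d by blast
  next
    case False
    then have lt: "\<mu> < (1 - \<tau>) * E" using ub by (simp add: algebra_simps)
    define \<delta> where "\<delta> = s * E"
    have d: "\<delta> > 0" using s E \<delta>_def by simp
    have "\<mu> * s\<^sup>2 * E \<le> (1 - \<tau>) * E * s\<^sup>2 * E"
      using lt s E by (intro mult_right_mono) auto
    also have "\<dots> \<le> (1 + \<tau>) * \<delta>\<^sup>2" unfolding \<delta>_def using st s E
      by (simp add: power2_eq_square mult_right_mono)
    finally have "\<mu> * s\<^sup>2 * E \<le> (1 + \<tau>) * \<delta>\<^sup>2" .
    moreover have "\<forall>X. \<bar>X - E\<bar> \<le> \<sigma> * E \<longrightarrow> \<delta>\<^sup>2 \<le> (X - \<mu>)\<^sup>2"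
    proof (intro allI impI)
      fix X assume "\<bar>X - E\<bar> \<le> \<sigma> * E"
      then have "\<delta> \<le> X - \<mu>" unfolding \<delta>_def s_def using lt by (simp add: abs_le_iff algebra_simps)
      then show "\<delta>\<^sup>2 \<le> (X - \<mu>)\<^sup>2" using d by (intro power_mono) auto
    qed
    ultimately show ?thesis using key d by blast
  qed
qed

lemma dc:
  assumes "finite A" "finite F"
  shows "(\<Sum>x\<in>A. card {R\<in>F. P x R}) = (\<Sum>R\<in>F. card {x\<in>A. P x R})"
proof -
  have "(\<Sum>x\<in>A. card {R\<in>F. P x R}) = (\<Sum>x\<in>A. \<Sum>R\<in>F. if P x R then 1 else 0)"
    using assms by (simp add: sum.inter_filter[symmetric])
  also have "\<dots> = (\<Sum>R\<in>F. \<Sum>x\<in>A. if P x R then 1 else 0)" by (rule sum.swap)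
  also have "\<dots> = (\<Sum>R\<in>F. card {x\<in>A. P x R})"
    using assms by (simp add: sum.inter_filter[symmetric])
  finally show ?thesis .
qed

theorem mainTheorem11:
  fixes S T :: "('a::{finite,field} ^ 'n) set" and \<sigma> \<tau> :: real and k :: nat
  assumes "0 < \<sigma>" and "\<sigma> < \<tau>" and "3 \<le> k" and "k \<le> CARD('n)"
    and "expected (k - 2) S \<ge> real CARD('a)"
    and "T \<in> flats k" and "\<not> balanced \<tau> S k T"
  shows "real (card {R \<in> flats (k - 2). R \<subseteq> T \<and> \<not> balanced \<sigma> S (k - 2) R})
           / real (card {R \<in> flats (k - 2). R \<subseteq> T})
         \<ge> 1 - (1 + \<tau>) / ((\<tau> - \<sigma>)\<^sup>2 * real CARD('a))"
proof -
  define q where "q = CARD('a)"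
  define F where "F = {R \<in> flats (k - 2). R \<subseteq> T}"
  define N where "N = card F"
  obtain a W where W: "vec.subspace W" "vec.dim W = k" and T: "T = (\<lambda>v. a + v) ` W"
    using assms(6) unfolding flats_def by auto
  have q2: "q \<ge> 2"
  proof -
    have "{0, 1::'a} \<subseteq> UNIV" by simp
    then have "card {0, 1::'a} \<le> q" unfolding q_def by (intro card_mono) auto
    then show ?thesis by simp
  qed
  have cardT: "card T = q ^ k" using card_flat[OF assms(6)] q_def by simp
  have cardR: "card R = q ^ (k - 2)" if "R \<in> F" for R using card_flat that q_def F_def by auto
  define D where "D x y = card {R\<in>F. x \<in> R \<and> y \<in> R}" for x y
  have aT: "a \<in> T" using T vec.subspace_0[OF W(1)] by force
  define d0 where "d0 = D a a"
  have dconst: "D x x = d0" if "x \<in> T" for x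
    using single_le[OF W(1) T that aT, of "k-2"] single_le[OF W(1) T aT that, of "k-2"]
    unfolding d0_def D_def F_def by simp
  obtain b where bT: "b \<in> T" "b \<noteq> a"
  proof -
    have "q ^ 1 \<le> q ^ k" using q2 assms(3) by (intro power_increasing) auto
    then have "card T \<ge> 2" using cardT q2 by simp
    moreover have "card T \<le> 1" if "T \<subseteq> {a}" using card_mono[OF _ that] by simp
    ultimately have "\<not> T \<subseteq> {a}" by linarith
    then show ?thesis using that by blast
  qed
  define e0 where "e0 = D a b"
  have econst: "D x y = e0" if "x \<in> T" "y \<in> T" "x \<noteq> y" for x y
    using pair_le[OF W(1) T that(1,2) aT bT(1) that(3) bT(2)[symmetric], of "k-2"]
      pair_le[OF W(1) T aT bT(1) that(1,2) bT(2)[symmetric] that(3), of "k-2"]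
    unfolding e0_def D_def F_def by simp
  have finF: "finite F" by simp
  have "(\<Sum>x\<in>T. D x x) = (\<Sum>R\<in>F. card {x\<in>T. x \<in> R \<and> x \<in> R})"
    unfolding D_def by (rule dc) simp_all
  also have "\<dots> = (\<Sum>R\<in>F. q ^ (k - 2))"
  proof (rule sum.cong)
    fix R assume "R \<in> F"
    then have "{x\<in>T. x \<in> R \<and> x \<in> R} = R" using F_def by auto
    then show "card {x\<in>T. x \<in> R \<and> x \<in> R} = q ^ (k - 2)" using cardR \<open>R \<in> F\<close> by simp
  qed simp
  finally have "card T * d0 = N * q ^ (k - 2)" using dconst N_def by simp
  moreover have qk0: "q ^ k = q ^ (k - 2) * q ^ 2"
  proof -
    have "k = k - 2 + 2" using assms(3) by simp
    then show ?thesis by (metis power_add)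
  qed
  ultimately have "q ^ (k - 2) * (q ^ 2 * d0) = q ^ (k - 2) * N"
    using cardT by (metis mult.commute mult.left_commute)
  moreover have "q ^ (k - 2) \<noteq> 0" using q2 by simp
  ultimately have Nd: "N = q ^ 2 * d0" by (metis mult_left_cancel)
  have "(\<Sum>y\<in>T - {a}. D a y) = (\<Sum>R\<in>{R\<in>F. a \<in> R}. card {y\<in>T - {a}. y \<in> R})"
  proof -
    have "(\<Sum>y\<in>T - {a}. D a y) = (\<Sum>y\<in>T - {a}. card {R\<in>{R\<in>F. a \<in> R}. y \<in> R})"
      unfolding D_def by (intro sum.cong) auto
    also have "\<dots> = (\<Sum>R\<in>{R\<in>F. a \<in> R}. card {y\<in>T - {a}. y \<in> R})" by (rule dc) simp_all
    finally show ?thesis .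
  qed
  also have "\<dots> = (\<Sum>R\<in>{R\<in>F. a \<in> R}. q ^ (k - 2) - 1)"
  proof (rule sum.cong)
    fix R assume R: "R \<in> {R\<in>F. a \<in> R}"
    then have "{y\<in>T - {a}. y \<in> R} = R - {a}" using F_def by auto
    then show "card {y\<in>T - {a}. y \<in> R} = q ^ (k - 2) - 1" using cardR R by simp
  qed simp
  moreover have "(\<Sum>y\<in>T - {a}. D a y) = (\<Sum>y\<in>T - {a}. e0)"
    by (rule sum.cong) (auto intro: econst[OF aT])
  moreover have "card {R\<in>F. a \<in> R} = d0" using dconst[OF aT] unfolding D_def by simp
  ultimately have "(card T - 1) * e0 = d0 * (q ^ (k - 2) - 1)"
    using aT by (simp add: card_Diff_singleton mult.commute)
  then have "real ((q ^ k - 1) * e0) = real (d0 * (q ^ (k - 2) - 1))" using cardT by simp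
  moreover have "1 \<le> q ^ k" "1 \<le> q ^ (k - 2)" using q2 by simp_all
  ultimately have id2: "(real q ^ k - 1) * e0 = d0 * (real q ^ (k - 2) - 1)"
    by (simp add: of_nat_diff)
  have e0d0: "real e0 * q ^ 2 \<le> d0"
  proof -
    have qk: "real q ^ k = real q ^ (k - 2) * q ^ 2" using qk0 by (metis of_nat_mult of_nat_power)
    have q1: "real q ^ k > 1" using q2 assms(3) by (simp add: one_less_power)
    have "real e0 * q ^ 2 * (real q ^ k - 1) = q ^ 2 * ((real q ^ k - 1) * e0)" by (simp add: algebra_simps)
    also have "\<dots> = q ^ 2 * (d0 * (real q ^ (k - 2) - 1))" using id2 by simp
    also have "\<dots> = d0 * (real q ^ k - q ^ 2)" unfolding qk by (simp add: algebra_simps)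
    also have "\<dots> \<le> d0 * (real q ^ k - 1)" using q2 by (intro mult_left_mono) auto
    finally show ?thesis using q1 by simp
  qed
  have Npos: "N > 0"
  proof -
    obtain U where U: "vec.subspace U" "U \<subseteq> vec.span W" "vec.dim U = k - 2"
      using vec.choose_subspace_of_subspace[of "k - 2" W] W(2) by auto
    have "vec.span W = W" using W(1) by (simp add: vec.span_eq_iff)
    then have "(\<lambda>v. a + v) ` U \<in> F" using U T unfolding F_def flats_def by blast
    then have "F \<noteq> {}" by blast
    then show ?thesis unfolding N_def using finF by (simp add: card_gt_0_iff)
  qed
  define S' where "S' = S \<inter> T"
  define m where "m = card S'"
  define X where "X R = card (R \<inter> S)" for R
  have sX: "(\<Sum>R\<in>F. X R) = m * d0"
  proof -
    have "(\<Sum>x\<in>S'. D x x) = (\<Sum>R\<in>F. card {x\<in>S'. x \<in> R \<and> x \<in> R})"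
      unfolding D_def by (rule dc) simp_all
    also have "\<dots> = (\<Sum>R\<in>F. X R)"
    proof (rule sum.cong)
      fix R assume "R \<in> F"
      then have "{x\<in>S'. x \<in> R \<and> x \<in> R} = R \<inter> S" using F_def S'_def by auto
      then show "card {x\<in>S'. x \<in> R \<and> x \<in> R} = X R" unfolding X_def by simp
    qed simp
    moreover have "(\<Sum>x\<in>S'. D x x) = (\<Sum>x\<in>S'. d0)"
      by (rule sum.cong) (auto simp: S'_def intro: dconst)
    ultimately show ?thesis unfolding m_def by simp
  qed
  have sX2: "(\<Sum>R\<in>F. X R ^ 2) \<le> m * (m * e0 + d0)"
  proof -
    have "(\<Sum>p\<in>S' \<times> S'. card {R\<in>F. fst p \<in> R \<and> snd p \<in> R})
        = (\<Sum>R\<in>F. card {p\<in>S' \<times> S'. fst p \<in> R \<and> snd p \<in> R})"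
      by (rule dc) simp_all
    also have "\<dots> = (\<Sum>R\<in>F. X R ^ 2)"
    proof (rule sum.cong)
      fix R assume "R \<in> F"
      then have "{p\<in>S' \<times> S'. fst p \<in> R \<and> snd p \<in> R} = (R \<inter> S) \<times> (R \<inter> S)" using F_def S'_def by auto
      then show "card {p\<in>S' \<times> S'. fst p \<in> R \<and> snd p \<in> R} = X R ^ 2"
        unfolding X_def by (simp add: card_cartesian_product power2_eq_square)
    qed simp
    finally have "(\<Sum>R\<in>F. X R ^ 2) = (\<Sum>x\<in>S'. \<Sum>y\<in>S'. D x y)"
      unfolding D_def by (simp add: sum.cartesian_product case_prod_beta)
    also have "\<dots> \<le> (\<Sum>x\<in>S'. m * e0 + d0)"
    proof (rule sum_mono)
      fix x assume x: "x \<in> S'"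
      have "(\<Sum>y\<in>S'. D x y) \<le> (\<Sum>y\<in>S'. e0 + (if y = x then d0 else 0))"
      proof (rule sum_mono)
        fix y assume "y \<in> S'"
        then show "D x y \<le> e0 + (if y = x then d0 else 0)"
          using x econst dconst S'_def by (cases "y = x") auto
      qed
      also have "\<dots> = m * e0 + d0" using x unfolding m_def by (simp add: sum.distrib)
      finally show "(\<Sum>y\<in>S'. D x y) \<le> m * e0 + d0" .
    qed
    also have "\<dots> = m * (m * e0 + d0)" unfolding m_def by simp
    finally show ?thesis .
  qed
  define \<mu> where "\<mu> = real m / real q ^ 2"
  define E where "E = expected (k - 2) S"
  have qpos: "real q > 0" using q2 by simp
  have Nr: "real N = real q ^ 2 * d0" using Nd by simp
  have rsX: "(\<Sum>R\<in>F. real (X R)) = N * \<mu>"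
    using sX qpos unfolding Nr \<mu>_def by (simp add: of_nat_sum[symmetric] del: of_nat_sum)
  have rsX2: "(\<Sum>R\<in>F. real (X R) ^ 2) \<le> N * \<mu> + N * \<mu> ^ 2"
  proof -
    have "(\<Sum>R\<in>F. real (X R) ^ 2) = real (\<Sum>R\<in>F. X R ^ 2)" by simp
    also have "\<dots> \<le> real (m * (m * e0 + d0))" using sX2 by (simp only: of_nat_le_iff)
    also have "\<dots> = real m * real m * e0 + real m * d0" by (simp add: algebra_simps)
    also have "\<dots> \<le> real m * real m * (d0 / real q ^ 2) + real m * d0"
    proof -
      have "real e0 \<le> d0 / real q ^ 2" using e0d0 qpos by (simp add: field_simps)
      then have "real m * real m * e0 \<le> real m * real m * (d0 / real q ^ 2)" by (rule mult_left_mono) simp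
      then show ?thesis by simp
    qed
    also have "\<dots> = N * \<mu> + N * \<mu> ^ 2" unfolding Nr \<mu>_def using qpos
      by (simp add: field_simps power2_eq_square)
    finally show ?thesis .
  qed
  have var: "(\<Sum>R\<in>F. (real (X R) - \<mu>) ^ 2) \<le> N * \<mu>"
  proof -
    have "(\<Sum>R\<in>F. (real (X R) - \<mu>) ^ 2) = (\<Sum>R\<in>F. real (X R) ^ 2) - 2 * \<mu> * (\<Sum>R\<in>F. real (X R)) + N * \<mu> ^ 2"
    proof -
      have "(\<Sum>R\<in>F. (real (X R) - \<mu>) ^ 2) = (\<Sum>R\<in>F. real (X R) ^ 2 - (2 * \<mu>) * real (X R) + \<mu> ^ 2)"
        by (intro sum.cong) (simp_all add: power2_diff algebra_simps)
      also have "\<dots> = (\<Sum>R\<in>F. real (X R) ^ 2) - (2 * \<mu>) * (\<Sum>R\<in>F. real (X R)) + N * \<mu> ^ 2"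
        unfolding N_def by (simp add: sum.distrib sum_subtractf sum_distrib_left)
      finally show ?thesis by simp
    qed
    then show ?thesis using rsX rsX2 by (simp add: power2_eq_square algebra_simps)
  qed
  define n where "n = CARD('n)"
  have EkE: "expected k S = real q ^ 2 * E"
  proof -
    have "n - (k - 2) = (n - k) + 2" using assms(3,4) n_def by simp
    then have "real q ^ (n - (k - 2)) = real q ^ (n - k) * real q ^ 2" by (metis power_add)
    then show ?thesis unfolding E_def expected_def q_def n_def using qpos q_def
      by (simp add: field_simps)
  qed
  have mT: "card (T \<inter> S) = m" unfolding m_def S'_def by (simp add: Int_commute)
  have ub: "\<bar>\<mu> - E\<bar> > \<tau> * E"
  proof -
    have "\<bar>real m - real q ^ 2 * E\<bar> > \<tau> * (real q ^ 2 * E)"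
      using assms(7) unfolding balanced_def mT EkE by simp
    moreover have "real m - real q ^ 2 * E = real q ^ 2 * (\<mu> - E)" unfolding \<mu>_def using qpos
      by (simp add: field_simps)
    ultimately have "real q ^ 2 * \<bar>\<mu> - E\<bar> > real q ^ 2 * (\<tau> * E)"
      by (simp add: abs_mult mult.assoc mult.left_commute)
    then show ?thesis using qpos by simp
  qed
  have qE: "real q \<le> E" using assms(5) unfolding E_def q_def by simp
  have mu0: "0 \<le> \<mu>" unfolding \<mu>_def by simp
  define C where "C = (1 + \<tau>) / ((\<tau> - \<sigma>)\<^sup>2 * real q)"
  obtain \<delta> where d: "\<delta> > 0" "\<mu> \<le> C * \<delta>\<^sup>2"
    and dX: "\<And>Y. \<bar>Y - E\<bar> \<le> \<sigma> * E \<Longrightarrow> \<delta>\<^sup>2 \<le> (Y - \<mu>)\<^sup>2"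
    using real_part[OF qpos qE assms(1,2) mu0 ub] unfolding C_def by blast
  define Bal where "Bal = {R\<in>F. balanced \<sigma> S (k - 2) R}"
  have BalF: "Bal \<subseteq> F" unfolding Bal_def by auto
  have "real (card Bal) * \<delta>\<^sup>2 = (\<Sum>R\<in>Bal. \<delta>\<^sup>2)" by simp
  also have "\<dots> \<le> (\<Sum>R\<in>Bal. (real (X R) - \<mu>) ^ 2)"
  proof (rule sum_mono)
    fix R assume "R \<in> Bal"
    then have "\<bar>real (X R) - E\<bar> \<le> \<sigma> * E" unfolding Bal_def balanced_def X_def E_def by (simp add: Int_commute)
    then show "\<delta>\<^sup>2 \<le> (real (X R) - \<mu>) ^ 2" by (rule dX)
  qed
  also have "\<dots> \<le> (\<Sum>R\<in>F. (real (X R) - \<mu>) ^ 2)" by (rule sum_mono2) (use BalF in auto)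
  also have "\<dots> \<le> N * \<mu>" by (rule var)
  also have "\<dots> \<le> N * (C * \<delta>\<^sup>2)" using d by (simp add: mult_left_mono)
  finally have "real (card Bal) \<le> N * C" using d by (simp add: mult.assoc)
  moreover have "{R \<in> flats (k - 2). R \<subseteq> T \<and> \<not> balanced \<sigma> S (k - 2) R} = F - Bal"
    unfolding F_def Bal_def by auto
  moreover have "real (card (F - Bal)) = N - real (card Bal)"
    using BalF unfolding N_def by (simp add: card_Diff_subset of_nat_diff card_mono)
  ultimately show ?thesis using Npos unfolding N_def[symmetric] F_def[symmetric] C_def[symmetric] q_def[symmetric]
    by (simp add: field_simps)
qed

end
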